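(* Let $X$ be a countable $P$-space. Then $\Sigma\mathcal O(X)$ is sober.
   Context: $\mathcal O(X)$ is the lattice of open subsets of $X$ ordered by inclusion, and $\Sigma\mathcal O(X)$ is this lattice with its Scott topology (a set $U$ is Scott open iff it is an upper set and for every directed $D$, $\bigvee D\in U$ implies $D\cap U\neq\emptyset$). A space is a $P$-space if countable intersections of open sets are open. A $T_0$ space is sober if every irreducible closed set equals $\overline{\{x\}}$ for some point $x$. *)

theory Defs
  imports "HOL-Analysis.Analysis"
begin

definition p_space :: "'a topology \<Rightarrow> bool" where
  "p_space X \<longleftrightarrow>
     (\<forall>F. countable F \<and> F \<noteq> {} \<and> (\<forall>U\<in>F. openin X U) \<longrightarrow> openin X (\<Inter>F))"

definition opens :: "'a topology \<Rightarrow> 'a set set" where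
  "opens X = {U. openin X U}"

text \<open>Directed subsets of O(X): nonempty, every two members have an upper bound in the set.
  The join of such a family in O(X) is its union.\<close>
definition directed_opens :: "'a topology \<Rightarrow> 'a set set \<Rightarrow> bool" where
  "directed_opens X D \<longleftrightarrow> D \<subseteq> opens X \<and> D \<noteq> {} \<and>
     (\<forall>A\<in>D. \<forall>B\<in>D. \<exists>C\<in>D. A \<subseteq> C \<and> B \<subseteq> C)"

definition scott_open :: "'a topology \<Rightarrow> 'a set set \<Rightarrow> bool" where
  "scott_open X S \<longleftrightarrow> S \<subseteq> opens X \<and>
     (\<forall>U V. U \<in> S \<and> V \<in> opens X \<and> U \<subseteq> V \<longrightarrow> V \<in> S) \<and>
     (\<forall>D. directed_opens X D \<and> \<Union>D \<in> S \<longrightarrow> D \<inter> S \<noteq> {})"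

lemma scott_openD:
  assumes "scott_open X S"
  shows "S \<subseteq> opens X"
    and "\<And>U V. U \<in> S \<Longrightarrow> V \<in> opens X \<Longrightarrow> U \<subseteq> V \<Longrightarrow> V \<in> S"
    and "\<And>D. directed_opens X D \<Longrightarrow> \<Union>D \<in> S \<Longrightarrow> \<exists>A\<in>D. A \<in> S"
  using assms unfolding scott_open_def by blast+

lemma scott_open_Int:
  assumes s: "scott_open X S" and t: "scott_open X T"
  shows "scott_open X (S \<inter> T)"
proof -
  have "\<exists>C\<in>D. C \<in> S \<inter> T" if d: "directed_opens X D" and u: "\<Union>D \<in> S \<inter> T" for D
  proof -
    obtain A where A: "A \<in> D" "A \<in> S" using scott_openD(3)[OF s d] u by blast
    obtain B where B: "B \<in> D" "B \<in> T" using scott_openD(3)[OF t d] u by blast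
    obtain C where C: "C \<in> D" "A \<subseteq> C" "B \<subseteq> C"
      using d A(1) B(1) unfolding directed_opens_def by blast
    have Co: "C \<in> opens X" using d C(1) unfolding directed_opens_def by auto
    have "C \<in> S" using scott_openD(2)[OF s A(2) Co C(2)] .
    moreover have "C \<in> T" using scott_openD(2)[OF t B(2) Co C(3)] .
    ultimately show ?thesis using C(1) by blast
  qed
  moreover have "S \<inter> T \<subseteq> opens X" using scott_openD(1)[OF s] by blast
  moreover have "V \<in> S \<inter> T" if "U \<in> S \<inter> T" "V \<in> opens X" "U \<subseteq> V" for U V
    using that scott_openD(2)[OF s] scott_openD(2)[OF t] by blast
  ultimately show ?thesis unfolding scott_open_def by blast
qed

lemma scott_open_Union:
  assumes k: "\<And>S. S \<in> K \<Longrightarrow> scott_open X S"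
  shows "scott_open X (\<Union>K)"
proof -
  have "\<exists>C\<in>D. C \<in> \<Union>K" if d: "directed_opens X D" and u: "\<Union>D \<in> \<Union>K" for D
  proof -
    obtain S where S: "S \<in> K" "\<Union>D \<in> S" using u by blast
    obtain A where "A \<in> D" "A \<in> S" using scott_openD(3)[OF k[OF S(1)] d S(2)] by blast
    then show ?thesis using S(1) by blast
  qed
  moreover have "\<Union>K \<subseteq> opens X" using scott_openD(1)[OF k] by blast
  moreover have "V \<in> \<Union>K" if h: "U \<in> \<Union>K" "V \<in> opens X" "U \<subseteq> V" for U V
  proof -
    obtain S where "S \<in> K" "U \<in> S" using h(1) by blast
    then show ?thesis using scott_openD(2)[OF k[of S]] h by blast
  qed
  ultimately show ?thesis unfolding scott_open_def by blast
qed

lemma istopology_scott_open: "istopology (scott_open X)"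
  unfolding istopology_def using scott_open_Int scott_open_Union by blast

text \<open>\<Sigma>O(X): O(X) with the Scott topology.\<close>
definition scott_opens :: "'a topology \<Rightarrow> 'a set topology" where
  "scott_opens X = topology (scott_open X)"

lemma openin_scott_opens: "openin (scott_opens X) S \<longleftrightarrow> scott_open X S"
  unfolding scott_opens_def by (simp add: topology_inverse'[OF istopology_scott_open])

definition irreducible_closed :: "'b topology \<Rightarrow> 'b set \<Rightarrow> bool" where
  "irreducible_closed T C \<longleftrightarrow> closedin T C \<and> C \<noteq> {} \<and>
     (\<forall>A B. closedin T A \<and> closedin T B \<and> C \<subseteq> A \<union> B \<longrightarrow> C \<subseteq> A \<or> C \<subseteq> B)"

definition sober :: "'b topology \<Rightarrow> bool" where
  "sober T \<longleftrightarrow> t0_space T \<and>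
     (\<forall>C. irreducible_closed T C \<longrightarrow> (\<exists>x\<in>topspace T. C = T closure_of {x}))"

end

theory Submission
  imports Defs
begin

definition mo :: "'a topology \<Rightarrow> 'a \<Rightarrow> 'a set" where
  "mo X x = \<Inter>{U. openin X U \<and> x \<in> U}"

definition gen :: "'a topology \<Rightarrow> 'a set \<Rightarrow> 'a set" where
  "gen X F = \<Union>(mo X ` F)"

definition upo :: "'a topology \<Rightarrow> 'a set \<Rightarrow> 'a set set" where
  "upo X k = {V. openin X V \<and> k \<subseteq> V}"

lemma mo_sub: "openin X V \<Longrightarrow> x \<in> V \<Longrightarrow> mo X x \<subseteq> V"
  unfolding mo_def by auto

lemma mo_open:
  assumes c: "countable (topspace X)" and p: "p_space X" and x: "x \<in> topspace X"
  shows "openin X (mo X x)"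
proof -
  let ?F = "{U. openin X U \<and> x \<in> U}"
  have "\<forall>y\<in>topspace X - mo X x. \<exists>U. U \<in> ?F \<and> y \<notin> U"
    unfolding mo_def by blast
  then obtain g where g: "\<And>y. y \<in> topspace X - mo X x \<Longrightarrow> g y \<in> ?F \<and> y \<notin> g y"
    by metis
  define F' where "F' = insert (topspace X) (g ` (topspace X - mo X x))"
  have "countable F'" unfolding F'_def using c by auto
  moreover have "F' \<noteq> {}" unfolding F'_def by auto
  moreover have "\<forall>U\<in>F'. openin X U" unfolding F'_def using g by auto
  ultimately have o: "openin X (\<Inter>F')" using p unfolding p_space_def by blast
  have "\<Inter>F' = mo X x"
  proof
    show "\<Inter>F' \<subseteq> mo X x"
    proof
      fix y assume y: "y \<in> \<Inter>F'"
      then have "y \<in> topspace X" unfolding F'_def by auto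
      show "y \<in> mo X x"
      proof (rule ccontr)
        assume "y \<notin> mo X x"
        then have "g y \<in> F'" "y \<notin> g y" using g \<open>y \<in> topspace X\<close> unfolding F'_def by auto
        then show False using y by blast
      qed
    qed
    have "\<forall>U\<in>F'. openin X U \<and> x \<in> U" unfolding F'_def using g x by auto
    then show "mo X x \<subseteq> \<Inter>F'"
      using mo_sub by (metis Inter_greatest)
  qed
  then show ?thesis using o by simp
qed

lemma mo_mem: "x \<in> topspace X \<Longrightarrow> x \<in> mo X x"
  unfolding mo_def by auto

lemma directed_bound:
  assumes d: "directed_opens X D" and f: "finite G" and g: "G \<subseteq> D"
  shows "\<exists>C\<in>D. \<forall>A\<in>G. A \<subseteq> C"
  using f g
proof (induction G rule: finite_induct)
  case empty
  then show ?case using d unfolding directed_opens_def by auto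
next
  case (insert a G)
  then obtain C where C: "C \<in> D" "\<forall>A\<in>G. A \<subseteq> C" by auto
  obtain C' where "C' \<in> D" "a \<subseteq> C'" "C \<subseteq> C'"
    using d C(1) insert.prems unfolding directed_opens_def by blast
  then show ?case using C by blast
qed

lemma gen_open:
  assumes c: "countable (topspace X)" and p: "p_space X" and F: "F \<subseteq> topspace X"
  shows "openin X (gen X F)"
  unfolding gen_def using mo_open[OF c p] F by (intro openin_Union) auto

lemma upo_scott:
  assumes c: "countable (topspace X)" and p: "p_space X" and F: "F \<subseteq> topspace X"
    and fin: "finite F"
  shows "scott_open X (upo X (gen X F))"
  unfolding scott_open_def
proof (intro conjI allI impI)
  show "upo X (gen X F) \<subseteq> opens X" unfolding upo_def opens_def by auto
next
  fix U V assume "U \<in> upo X (gen X F) \<and> V \<in> opens X \<and> U \<subseteq> V"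
  then show "V \<in> upo X (gen X F)" unfolding upo_def opens_def by auto
next
  fix D assume h: "directed_opens X D \<and> \<Union>D \<in> upo X (gen X F)"
  then have d: "directed_opens X D" by blast
  have "\<forall>x\<in>F. \<exists>A\<in>D. x \<in> A"
    using h F mo_mem[of _ X] unfolding upo_def gen_def by blast
  then obtain a where a: "\<And>x. x \<in> F \<Longrightarrow> a x \<in> D \<and> x \<in> a x" by metis
  obtain C where C: "C \<in> D" "\<forall>A\<in>a ` F. A \<subseteq> C"
    using directed_bound[OF d, of "a ` F"] fin a by auto
  have Co: "openin X C" using C(1) d unfolding directed_opens_def opens_def by auto
  have "gen X F \<subseteq> C" unfolding gen_def
  proof
    fix y assume "y \<in> \<Union>(mo X ` F)"
    then obtain x where "x \<in> F" "y \<in> mo X x" by auto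
    then show "y \<in> C" using mo_sub[OF Co, of x] a C(2) by blast
  qed
  then have "C \<in> upo X (gen X F)" using Co unfolding upo_def by auto
  then show "D \<inter> upo X (gen X F) \<noteq> {}" using C(1) by blast
qed

lemma topspace_scott: "topspace (scott_opens X) = opens X"
proof -
  have "scott_open X (opens X)" unfolding scott_open_def directed_opens_def opens_def
    by auto
  then have "opens X \<subseteq> topspace (scott_opens X)"
    by (metis openin_scott_opens openin_subset)
  moreover have "topspace (scott_opens X) \<subseteq> opens X"
    by (metis openin_scott_opens openin_topspace scott_openD(1))
  ultimately show ?thesis by blast
qed

lemma closed_down:
  assumes C: "closedin (scott_opens X) C" and W: "W \<in> C" and V: "openin X V" and VW: "V \<subseteq> W"
  shows "V \<in> C"
proof (rule ccontr)
  assume "V \<notin> C"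
  have o: "scott_open X (opens X - C)"
    using C unfolding closedin_def topspace_scott openin_scott_opens by blast
  have "V \<in> opens X - C" using V \<open>V \<notin> C\<close> unfolding opens_def by auto
  moreover have "W \<in> opens X" using C W closedin_subset topspace_scott by blast
  ultimately have "W \<in> opens X - C" using scott_openD(2)[OF o] VW by blast
  then show False using W by blast
qed

lemma closed_dirsup:
  assumes C: "closedin (scott_opens X) C" and d: "directed_opens X D" and DC: "D \<subseteq> C"
  shows "\<Union>D \<in> C"
proof (rule ccontr)
  assume n: "\<Union>D \<notin> C"
  have o: "scott_open X (opens X - C)"
    using C unfolding closedin_def topspace_scott openin_scott_opens by blast
  have "openin X (\<Union>D)" using d unfolding directed_opens_def opens_def by auto
  then have "\<Union>D \<in> opens X - C" using n unfolding opens_def by auto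
  then obtain A where "A \<in> D" "A \<in> opens X - C" using scott_openD(3)[OF o d] by blast
  then show False using DC by blast
qed

lemma irred_meet:
  assumes C: "irreducible_closed T C" and P: "openin T P" and Q: "openin T Q"
    and "P \<inter> C \<noteq> {}" and "Q \<inter> C \<noteq> {}"
  shows "P \<inter> Q \<inter> C \<noteq> {}"
proof
  assume e: "P \<inter> Q \<inter> C = {}"
  have cA: "closedin T (topspace T - P)" using P by blast
  have cB: "closedin T (topspace T - Q)" using Q by blast
  have "C \<subseteq> topspace T" using C unfolding irreducible_closed_def using closedin_subset by blast
  then have "C \<subseteq> (topspace T - P) \<union> (topspace T - Q)" using e by blast
  then have "C \<subseteq> topspace T - P \<or> C \<subseteq> topspace T - Q"
    using C cA cB unfolding irreducible_closed_def by blast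
  then show False using assms(4,5) by blast
qed

theorem corollary4p7:
  fixes X :: "'a topology"
  assumes "countable (topspace X)"
    and "p_space X"
  shows "sober (scott_opens X)"
  unfolding sober_def
proof (intro conjI allI impI)
  note c = assms(1) and p = assms(2)
  show "t0_space (scott_opens X)"
    unfolding t0_space_def topspace_scott
  proof (intro ballI impI)
    fix U V assume U: "U \<in> opens X" and V: "V \<in> opens X" and ne: "U \<noteq> V"
    have main: "\<exists>S. openin (scott_opens X) S \<and> A \<in> S \<and> B \<notin> S"
      if A: "A \<in> opens X" and B: "B \<in> opens X" and z: "z \<in> A" "z \<notin> B" for A B z
    proof -
      have zt: "z \<in> topspace X" using A z openin_subset unfolding opens_def by blast
      have s: "scott_open X (upo X (gen X {z}))" using upo_scott[OF c p] zt by auto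
      have "mo X z \<subseteq> A" using A z(1) mo_sub[of X A z] unfolding opens_def by auto
      then have "A \<in> upo X (gen X {z})" using A unfolding upo_def gen_def opens_def by auto
      moreover have "B \<notin> upo X (gen X {z})" using z mo_mem[OF zt] unfolding upo_def gen_def by auto
      ultimately show ?thesis using s openin_scott_opens by blast
    qed
    obtain z where "z \<in> U \<and> z \<notin> V \<or> z \<in> V \<and> z \<notin> U" using ne by blast
    then show "\<exists>S. openin (scott_opens X) S \<and> (U \<notin> S) = (V \<in> S)"
      using main[OF U V] main[OF V U] by blast
  qed
next
  fix C assume irr: "irreducible_closed (scott_opens X) C"
  note c = assms(1) and p = assms(2)
  have Cc: "closedin (scott_opens X) C" and Cne: "C \<noteq> {}"
    using irr unfolding irreducible_closed_def by auto
  have Cop: "C \<subseteq> opens X" using closedin_subset[OF Cc] topspace_scott by blast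
  define cc where "cc = \<Union>C"
  have cct: "cc \<subseteq> topspace X" using Cop unfolding cc_def opens_def
    using openin_subset by blast
  have meet: "upo X (gen X F) \<inter> C \<noteq> {}" if "finite F" "F \<subseteq> cc" for F
    using that
  proof (induction F rule: finite_induct)
    case empty
    then show ?case using Cne Cop unfolding upo_def gen_def opens_def by auto
  next
    case (insert x F)
    have xt: "x \<in> topspace X" using insert cct by auto
    obtain A where A: "A \<in> C" "x \<in> A" using insert.prems unfolding cc_def by auto
    have "openin X A" using A Cop unfolding opens_def by auto
    then have "mo X x \<subseteq> A" using A(2) mo_sub[of X A x] by auto
    then have "A \<in> upo X (gen X {x})" using \<open>openin X A\<close> unfolding upo_def gen_def by auto
    then have m1: "upo X (gen X {x}) \<inter> C \<noteq> {}" using A by blast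
    have o1: "openin (scott_opens X) (upo X (gen X {x}))"
      using upo_scott[OF c p, of "{x}"] xt openin_scott_opens by auto
    have o2: "openin (scott_opens X) (upo X (gen X F))"
      using upo_scott[OF c p, of F] insert cct openin_scott_opens by auto
    have "upo X (gen X {x}) \<inter> upo X (gen X F) \<inter> C \<noteq> {}"
      using irred_meet[OF irr o1 o2 m1] insert by auto
    moreover have "upo X (gen X {x}) \<inter> upo X (gen X F) = upo X (gen X (insert x F))"
      unfolding upo_def gen_def by auto
    ultimately show ?case by simp
  qed
  have genC: "gen X F \<in> C" if FF: "finite F" "F \<subseteq> cc" for F
  proof -
    obtain W where W: "W \<in> C" "gen X F \<subseteq> W" using meet[OF FF] unfolding upo_def by auto
    show ?thesis using closed_down[OF Cc W(1) gen_open[OF c p] W(2)] FF cct by auto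
  qed
  define D where "D = {gen X F | F. finite F \<and> F \<subseteq> cc}"
  have dD: "directed_opens X D"
    unfolding directed_opens_def
  proof (intro conjI ballI)
    show "D \<subseteq> opens X" unfolding D_def opens_def using gen_open[OF c p] cct by auto
    show "D \<noteq> {}" unfolding D_def by auto
    fix A B assume "A \<in> D" "B \<in> D"
    then obtain F G where "A = gen X F" "B = gen X G" "finite F" "F \<subseteq> cc" "finite G" "G \<subseteq> cc"
      unfolding D_def by auto
    moreover have "gen X (F \<union> G) = gen X F \<union> gen X G" unfolding gen_def by auto
    ultimately show "\<exists>C\<in>D. A \<subseteq> C \<and> B \<subseteq> C" unfolding D_def
      by (intro bexI[of _ "gen X (F \<union> G)"]) auto
  qed
  have "\<Union>D = cc"
  proof
    show "\<Union>D \<subseteq> cc"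
    proof
      fix y assume "y \<in> \<Union>D"
      then obtain F x where F: "F \<subseteq> cc" "x \<in> F" "y \<in> mo X x" unfolding D_def gen_def by auto
      then obtain A where "A \<in> C" "x \<in> A" unfolding cc_def by auto
      then have "mo X x \<subseteq> A" using Cop mo_sub[of X A x] unfolding opens_def by auto
      then show "y \<in> cc" using F \<open>A \<in> C\<close> unfolding cc_def by auto
    qed
    show "cc \<subseteq> \<Union>D"
    proof
      fix y assume y: "y \<in> cc"
      then have "y \<in> gen X {y}" using mo_mem[of y X] cct unfolding gen_def by auto
      moreover have "gen X {y} \<in> D" using y unfolding D_def by auto
      ultimately show "y \<in> \<Union>D" by blast
    qed
  qed
  moreover have "D \<subseteq> C" unfolding D_def using genC by auto
  ultimately have ccC: "cc \<in> C" using closed_dirsup[OF Cc dD] by simp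
  have cctop: "cc \<in> topspace (scott_opens X)" using ccC Cop topspace_scott by auto
  have "C = scott_opens X closure_of {cc}"
  proof
    show "scott_opens X closure_of {cc} \<subseteq> C"
      using closure_of_minimal[OF _ Cc] ccC by auto
    show "C \<subseteq> scott_opens X closure_of {cc}"
    proof
      fix W assume W: "W \<in> C"
      have "cc \<in> scott_opens X closure_of {cc}" using closure_of_subset[of "{cc}" "scott_opens X"] cctop by auto
      moreover have "W \<subseteq> cc" using W unfolding cc_def by auto
      moreover have "openin X W" using W Cop unfolding opens_def by auto
      ultimately show "W \<in> scott_opens X closure_of {cc}"
        using closed_down[OF closedin_closure_of] by blast
    qed
  qed
  then show "\<exists>x\<in>topspace (scott_opens X). C = scott_opens X closure_of {x}"
    using cctop by blast
qed

end
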